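(* Let $A\in\mathbb{R}^{n\times n}$, $t\ge0$, and $\Omega=c+G\mathbf{B}_p$ with $c\in\mathbb{R}^n$, $G\in\mathbb{R}^{n\times p}$, $\mathrm{rank}(G)=n$. Then for every $k\in\mathbb{N}$ with $\lambda(t,\Omega,k)\ge0$, $$\mathcal{L}(t,k)\bigl[c+\lambda(t,\Omega,k)G\mathbf{B}_p\bigr]\subseteq\mathrm{e}^{tA}\Omega.$$
   Context: A norm $\|\cdot\|$ is fixed on each $\mathbb{R}^k$, $\mathbf{B}_k$ is its closed unit ball, and matrices carry induced operator norms. $G^\dagger$ is the Moore–Penrose inverse. $\mathcal{L}(t,k)=\sum_{j=0}^{k-1}(tA)^j/j!$. $\theta(r,k)=\sum_{j=k}^\infty r^j/j!$ for $r\ge0$, $k\in\mathbb{N}$. For $\Omega$ given with its representation $(c,G)$, the deflation coefficient is $$\lambda(t,\Omega,k)=\frac{1-\mathrm{e}^{t\|A\|}\theta(t\|A\|,k)\|G^\dagger\|\|c\|}{1+\mathrm{e}^{t\|A\|}\theta(t\|A\|,k)\|G^\dagger\|\|G\|}.$$ *)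

theory Defs
  imports "HOL-Analysis.Analysis"
begin

definition is_norm :: "('a::real_vector \<Rightarrow> real) \<Rightarrow> bool" where
  "is_norm N \<longleftrightarrow> (\<forall>x. 0 \<le> N x) \<and> (\<forall>x. N x = 0 \<longleftrightarrow> x = 0)
     \<and> (\<forall>a x. N (a *\<^sub>R x) = \<bar>a\<bar> * N x) \<and> (\<forall>x y. N (x + y) \<le> N x + N y)"

definition unit_ball :: "('a \<Rightarrow> real) \<Rightarrow> 'a set" where
  "unit_ball N = {x. N x \<le> 1}"

definition op_norm :: "(real^'q \<Rightarrow> real) \<Rightarrow> (real^'m \<Rightarrow> real) \<Rightarrow> real^'q^'m \<Rightarrow> real" where
  "op_norm Nin Nout M = Sup {Nout (M *v x) | x. Nin x \<le> 1}"

definition mp_inverse :: "real^'p^'n \<Rightarrow> real^'n^'p" where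
  "mp_inverse G = (THE X. G ** X ** G = G \<and> X ** G ** X = X
      \<and> transpose (G ** X) = G ** X \<and> transpose (X ** G) = X ** G)"

definition matpow :: "real^'n^'n \<Rightarrow> nat \<Rightarrow> real^'n^'n" where
  "matpow A j = ((\<lambda>M. A ** M) ^^ j) (mat 1)"

definition mexp :: "real^'n^'n \<Rightarrow> real^'n^'n" where
  "mexp M = (\<Sum>j. (1 / fact j) *\<^sub>R matpow M j)"

definition Ltrunc :: "real^'n^'n \<Rightarrow> real \<Rightarrow> nat \<Rightarrow> real^'n^'n" where
  "Ltrunc A t k = (\<Sum>j<k. (1 / fact j) *\<^sub>R matpow (t *\<^sub>R A) j)"

definition theta :: "real \<Rightarrow> nat \<Rightarrow> real" where
  "theta r k = (\<Sum>j. r ^ (j + k) / fact (j + k))"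

text \<open>Deflation coefficient lambda(t,Omega,k) for Omega = c + G B_p; Nn, Np are the norms on R^n, R^p.\<close>
definition deflation :: "(real^'n \<Rightarrow> real) \<Rightarrow> (real^'p \<Rightarrow> real) \<Rightarrow> real^'n^'n \<Rightarrow> real
     \<Rightarrow> real^'n \<Rightarrow> real^'p^'n \<Rightarrow> nat \<Rightarrow> real" where
  "deflation Nn Np A t c G k =
     (let a = op_norm Nn Nn A;
          q = exp (t * a) * theta (t * a) k * op_norm Nn Np (mp_inverse G)
      in (1 - q * Nn c) / (1 + q * op_norm Np Nn G))"

end

theory Submission
  imports Defs "HOL-Analysis.Analysis"
begin


lemma nrm_basic:
  assumes N: "is_norm N"
  shows "N 0 = 0" "N (-x) = N x" "N (x + y) \<le> N x + N y" "0 \<le> N x"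
    "N (a *\<^sub>R x) = \<bar>a\<bar> * N x" "N x = 0 \<longleftrightarrow> x = 0"
    "\<bar>N x - N y\<bar> \<le> N (x - y)" "N (x - y) \<le> N x + N y"
proof -
  note D = N[unfolded is_norm_def]
  show "N 0 = 0" "N (x + y) \<le> N x + N y" "0 \<le> N x" "N (a *\<^sub>R x) = \<bar>a\<bar> * N x"
      "N x = 0 \<longleftrightarrow> x = 0" using D by auto
  have neg: "N (-z) = N z" for z using D[THEN conjunct2, THEN conjunct2, THEN conjunct1, rule_format, of "-1" z] by simp
  show "N (-x) = N x" by (rule neg)
  have "N x \<le> N (x - y) + N y" using D by (metis diff_add_cancel)
  moreover have "N y \<le> N (y - x) + N x" using D by (metis diff_add_cancel)
  moreover have "N (y - x) = N (x - y)" using neg by (metis minus_diff_eq)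
  ultimately show "\<bar>N x - N y\<bar> \<le> N (x - y)" by linarith
  show "N (x - y) \<le> N x + N y" using D neg by (metis diff_conv_add_uminus)
qed

lemma nrm_sum:
  assumes N: "is_norm N" shows "N (sum f S) \<le> (\<Sum>i\<in>S. N (f i))"
proof (induction S rule: infinite_finite_induct)
  case (infinite A) thus ?case using nrm_basic(1)[OF N] by simp
next
  case empty thus ?case using nrm_basic(1)[OF N] by simp
next
  case (insert x F)
  thus ?case using nrm_basic(3)[OF N, of "f x" "sum f F"] by simp
qed

lemma nrm_upper:
  fixes N :: "real^'n \<Rightarrow> real"
  assumes N: "is_norm N"
  shows "\<exists>K\<ge>0. \<forall>x. N x \<le> K * norm x"
proof (intro exI[of _ "\<Sum>i\<in>UNIV. N (axis i 1)"] conjI allI)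
  show "0 \<le> (\<Sum>i\<in>UNIV. N (axis i 1))" using nrm_basic[OF N] by (simp add: sum_nonneg)
  fix x :: "real^'n"
  have "N x = N (\<Sum>i\<in>UNIV. x $ i *\<^sub>R axis i 1)"
    using basis_expansion[of x] by (simp add: scalar_mult_eq_scaleR)
  also have "\<dots> \<le> (\<Sum>i\<in>UNIV. N (x $ i *\<^sub>R axis i 1))" by (rule nrm_sum[OF N])
  also have "\<dots> = (\<Sum>i\<in>UNIV. \<bar>x $ i\<bar> * N (axis i 1))" using nrm_basic[OF N] by simp
  also have "\<dots> \<le> (\<Sum>i\<in>UNIV. norm x * N (axis i 1))"
    by (intro sum_mono mult_right_mono component_le_norm_cart) (use nrm_basic[OF N] in auto)
  also have "\<dots> = (\<Sum>i\<in>UNIV. N (axis i 1)) * norm x" by (simp add: sum_distrib_left mult.commute)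
  finally show "N x \<le> (\<Sum>i\<in>UNIV. N (axis i 1)) * norm x" .
qed

lemma nrm_tendsto:
  fixes N :: "real^'n \<Rightarrow> real"
  assumes N: "is_norm N" and f: "(f \<longlongrightarrow> l) F"
  shows "((\<lambda>x. N (f x)) \<longlongrightarrow> N l) F"
proof -
  obtain K where K: "K \<ge> 0" "\<And>x. N x \<le> K * norm x" using nrm_upper[OF N] by blast
  have "((\<lambda>x. norm (f x - l)) \<longlongrightarrow> 0) F"
    using tendsto_norm[OF tendsto_diff[OF f tendsto_const[of l]]] by simp
  hence "((\<lambda>x. K * norm (f x - l)) \<longlongrightarrow> K * 0) F"
    by (intro tendsto_intros)
  hence z: "((\<lambda>x. K * norm (f x - l)) \<longlongrightarrow> 0) F" by simp
  have "((\<lambda>x. N (f x) - N l) \<longlongrightarrow> 0) F"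
  proof (rule Lim_null_comparison[OF _ z])
    show "\<forall>\<^sub>F x in F. norm (N (f x) - N l) \<le> K * norm (f x - l)"
      by (intro always_eventually allI) (metis K(2) nrm_basic(7)[OF N] order_trans real_norm_def)
  qed
  thus ?thesis by (simp add: LIM_zero_iff)
qed

lemma nrm_cont: "is_norm (N :: real^'n \<Rightarrow> real) \<Longrightarrow> continuous_on S N"
  by (simp add: continuous_on_def nrm_tendsto[OF _ tendsto_ident_at])

lemma nrm_lower:
  fixes N :: "real^'n \<Rightarrow> real"
  assumes N: "is_norm N"
  shows "\<exists>k\<ge>0. \<forall>x. norm x \<le> k * N x"
proof -
  have "compact (sphere (0::real^'n) 1)" "sphere (0::real^'n) 1 \<noteq> {}"
  proof -
    show "compact (sphere (0::real^'n) 1)" by (rule compact_sphere)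
    have "axis undefined (1::real) \<in> sphere (0::real^'n) 1" by (simp add: dist_norm norm_axis_1)
    thus "sphere (0::real^'n) 1 \<noteq> {}" by blast
  qed
  then obtain x0 where x0: "x0 \<in> sphere 0 1" "\<And>y. y \<in> sphere 0 1 \<Longrightarrow> N x0 \<le> N y"
    using continuous_attains_inf[OF _ _ nrm_cont[OF N]] by meson
  have "x0 \<noteq> 0" using x0 by auto
  hence m: "N x0 > 0" using nrm_basic(4,6)[OF N, of x0] by (auto simp: less_le)
  show ?thesis
  proof (intro exI[of _ "1 / N x0"] conjI allI)
    show "0 \<le> 1 / N x0" using m by simp
    fix x :: "real^'n"
    show "norm x \<le> 1 / N x0 * N x"
    proof (cases "x = 0")
      case True thus ?thesis using nrm_basic(1)[OF N] by simp
    next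
      case False
      hence "(1 / norm x) *\<^sub>R x \<in> sphere 0 1" by simp
      hence "N x0 \<le> N ((1 / norm x) *\<^sub>R x)" by (rule x0(2))
      also have "\<dots> = N x / norm x" using nrm_basic(5)[OF N] by simp
      finally have "N x0 * norm x \<le> N x" using False by (simp add: field_simps)
      thus ?thesis using m by (simp add: field_simps)
    qed
  qed
qed

lemma op_norm_bound:
  fixes Nin :: "real^'q \<Rightarrow> real" and Nout :: "real^'m \<Rightarrow> real" and M :: "real^'q^'m"
  assumes Ni: "is_norm Nin" and No: "is_norm Nout"
  shows "0 \<le> op_norm Nin Nout M" "Nout (M *v x) \<le> op_norm Nin Nout M * Nin x"
proof -
  obtain K where K: "K \<ge> 0" "\<And>x. Nout x \<le> K * norm x" using nrm_upper[OF No] by blast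
  obtain k where k: "k \<ge> 0" "\<And>x. norm x \<le> k * Nin x" using nrm_lower[OF Ni] by blast
  obtain B where B: "\<And>x. norm (M *v x) \<le> B * norm x"
    using bounded_linear.bounded[OF matrix_vector_mul_bounded_linear[of M]] by (auto simp: mult.commute)
  define S where "S = {Nout (M *v x) | x. Nin x \<le> 1}"
  have bdd: "bdd_above S" unfolding S_def bdd_above_def
  proof (intro exI[of _ "K * \<bar>B\<bar> * k"] ballI)
    fix s assume "s \<in> {Nout (M *v x) |x. Nin x \<le> 1}"
    then obtain x where x: "s = Nout (M *v x)" "Nin x \<le> 1" by auto
    have "s \<le> K * norm (M *v x)" using K x by simp
    also have "\<dots> \<le> K * (\<bar>B\<bar> * norm x)" using B[of x] K
      by (intro mult_left_mono) (metis abs_ge_self mult_right_mono norm_ge_zero order_trans, simp)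
    also have "\<dots> \<le> K * (\<bar>B\<bar> * k)"
    proof -
      have "norm x \<le> k" using k(2)[of x] x(2) k(1) by (meson mult_left_le order_trans)
      thus ?thesis using K by (intro mult_left_mono) (auto intro: mult_left_mono)
    qed
    finally show "s \<le> K * \<bar>B\<bar> * k" by (simp add: mult.assoc)
  qed
  have mem: "Nin x \<le> 1 \<Longrightarrow> Nout (M *v x) \<le> op_norm Nin Nout M" for x
    unfolding op_norm_def S_def[symmetric] by (rule cSup_upper[OF _ bdd]) (auto simp: S_def)
  show nn: "0 \<le> op_norm Nin Nout M" using mem[of 0] nrm_basic(1)[OF Ni] nrm_basic(1)[OF No] by simp
  show "Nout (M *v x) \<le> op_norm Nin Nout M * Nin x"
  proof (cases "x = 0")
    case True thus ?thesis using nrm_basic(1)[OF Ni] nrm_basic(1)[OF No] by simp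
  next
    case False
    hence p: "Nin x > 0" using nrm_basic(4,6)[OF Ni, of x] by (auto simp: less_le)
    have "Nin ((1 / Nin x) *\<^sub>R x) \<le> 1" using p nrm_basic(5)[OF Ni] by simp
    hence "Nout (M *v ((1 / Nin x) *\<^sub>R x)) \<le> op_norm Nin Nout M" by (rule mem)
    also have "Nout (M *v ((1 / Nin x) *\<^sub>R x)) = Nout (M *v x) / Nin x"
      using p nrm_basic(5)[OF No] by (simp add: matrix_scaleR_vector_ac scaleR_matrix_vector_assoc[symmetric])
    finally show ?thesis using p by (simp add: field_simps)
  qed
qed




lemma matpow_0[simp]: "matpow A 0 = mat 1" by (simp add: matpow_def)
lemma matpow_Suc: "matpow A (Suc j) = A ** matpow A j" by (simp add: matpow_def)

lemma matpow_scale: "matpow (s *\<^sub>R A) j = s ^ j *\<^sub>R matpow A j"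
  by (induction j) (simp_all add: matpow_Suc scalar_matrix_assoc matrix_scalar_ac mult.commute)

lemma matpow_add: "matpow A i ** matpow A j = matpow A (i + j)"
  by (induction i) (simp_all add: matpow_Suc, metis matrix_mul_assoc)

lemma matpow_nrm:
  fixes A :: "real^'n^'n"
  assumes N: "is_norm N"
  shows "N (matpow A j *v y) \<le> op_norm N N A ^ j * N y"
proof (induction j)
  case 0 thus ?case by simp
next
  case (Suc j)
  have "N (matpow A (Suc j) *v y) = N (A *v (matpow A j *v y))"
    by (simp add: matpow_Suc matrix_vector_mul_assoc)
  also have "\<dots> \<le> op_norm N N A * N (matpow A j *v y)" by (rule op_norm_bound(2)[OF N N])
  also have "\<dots> \<le> op_norm N N A * (op_norm N N A ^ j * N y)"
    by (intro mult_left_mono Suc op_norm_bound(1)[OF N N])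
  finally show ?case by simp
qed

lemma mv_bl: "bounded_linear (\<lambda>M::real^'n^'m. M *v y)"
proof -
  have "linear (\<lambda>M::real^'n^'m. M *v y)"
    by (rule linearI) (simp_all add: matrix_vector_mult_add_rdistrib scaleR_matrix_vector_assoc)
  thus ?thesis by (simp add: linear_conv_bounded_linear)
qed

lemma summable_matI:
  fixes f :: "nat \<Rightarrow> real^'n^'m"
  assumes "\<And>r l. summable (\<lambda>j. f j $ r $ l)"
  shows "summable f"
proof -
  have "f sums (\<chi> r l. \<Sum>j. f j $ r $ l)" unfolding sums_def
    by (intro vec_tendstoI) (simp add: sum_component summable_LIMSEQ assms)
  thus ?thesis by (rule sums_summable)
qed

lemma summable_mat_entry:
  fixes f :: "nat \<Rightarrow> real^'n^'m"
  assumes "summable f"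
  shows "(\<lambda>j. f j $ r $ l) sums (suminf f $ r $ l)"
  using tendsto_vec_nth[OF tendsto_vec_nth[OF summable_LIMSEQ[OF assms]], of r l]
  by (simp add: sums_def sum_component)

lemma matpow_entry:
  fixes X :: "real^'n^'n"
  shows "\<bar>matpow X j $ r $ l\<bar> \<le> (\<Sum>r\<in>UNIV. \<Sum>l\<in>UNIV. \<bar>X $ r $ l\<bar>) ^ j"
proof (induction j arbitrary: r l)
  case 0 thus ?case by (simp add: mat_def)
next
  case (Suc j)
  define s where "s = (\<Sum>r\<in>UNIV. \<Sum>l\<in>UNIV. \<bar>X $ r $ l\<bar>)"
  have rs: "(\<Sum>m\<in>UNIV. \<bar>X $ r $ m\<bar>) \<le> s" unfolding s_def
    by (rule member_le_sum[of r UNIV "\<lambda>r. \<Sum>l\<in>UNIV. \<bar>X $ r $ l\<bar>"]) (auto intro: sum_nonneg)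
  have "\<bar>matpow X (Suc j) $ r $ l\<bar> = \<bar>\<Sum>m\<in>UNIV. X $ r $ m * matpow X j $ m $ l\<bar>"
    by (simp add: matpow_Suc matrix_matrix_mult_def)
  also have "\<dots> \<le> (\<Sum>m\<in>UNIV. \<bar>X $ r $ m\<bar> * s ^ j)"
    by (rule order_trans[OF sum_abs]) (auto intro!: sum_mono mult_left_mono simp: abs_mult Suc[unfolded s_def[symmetric]])
  also have "\<dots> = (\<Sum>m\<in>UNIV. \<bar>X $ r $ m\<bar>) * s ^ j" by (simp add: sum_distrib_right)
  also have "\<dots> \<le> s * s ^ j"
    by (rule mult_right_mono[OF rs]) (simp add: s_def sum_nonneg)
  finally show ?case by (simp add: s_def)
qed

lemma exp_term_summable: "summable (\<lambda>n. (x::real) ^ n / fact n)"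
  using summable_exp[of x] by (simp add: divide_inverse mult.commute)

lemma mexp_entry_abs_summable:
  fixes X :: "real^'n^'n"
  shows "summable (\<lambda>j. norm (((1 / fact j) *\<^sub>R matpow X j) $ r $ l))"
proof (rule summable_comparison_test[OF _ exp_term_summable])
  define s where "s = (\<Sum>r\<in>UNIV. \<Sum>l\<in>UNIV. \<bar>X $ r $ l\<bar>)"
  show "\<exists>N. \<forall>n\<ge>N. norm (norm (((1 / fact n) *\<^sub>R matpow X n) $ r $ l)) \<le> s ^ n / fact n"
    using matpow_entry[of X n r l for n] by (auto simp: s_def divide_right_mono)
qed

lemma mexp_summable:
  fixes X :: "real^'n^'n"
  shows "summable (\<lambda>j. (1 / fact j) *\<^sub>R matpow X j)"
  by (rule summable_matI) (rule summable_norm_cancel[OF mexp_entry_abs_summable])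

lemma mexp_sums: "(\<lambda>j. (1 / fact j) *\<^sub>R matpow X j) sums mexp X"
  unfolding mexp_def using mexp_summable by (rule summable_sums)

lemma mexp_sums_vec: "(\<lambda>j. (1 / fact j) *\<^sub>R (matpow X j *v y)) sums (mexp X *v y)"
  using bounded_linear.sums[OF mv_bl[of y] mexp_sums[of X]]
  by (simp add: scaleR_matrix_vector_assoc)




lemma binom_alt_sum:
  "(\<Sum>i\<le>k. (1 / fact i) * (1 / fact (k - i)) * (-1::real) ^ (k - i)) = (if k = 0 then 1 else 0)"
proof -
  have "(\<Sum>i\<le>k. (1 / fact i) * (1 / fact (k - i)) * (-1::real) ^ (k - i))
      = (\<Sum>i\<le>k. of_nat (k choose i) * 1 ^ i * (-1::real) ^ (k - i)) / fact k"
    unfolding sum_divide_distrib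
    by (intro sum.cong refl) (simp add: binomial_fact field_simps)
  also have "\<dots> = (1 + (-1::real)) ^ k / fact k" by (simp only: binomial_ring)
  also have "\<dots> = (if k = 0 then 1 else 0)" by simp
  finally show ?thesis .
qed

lemma mexp_inv:
  fixes X :: "real^'n^'n"
  shows "mexp X ** mexp (-X) = mat 1"
proof -
  define a where "a j = (1 / fact j) *\<^sub>R matpow X j" for j
  define b where "b j = (1 / fact j) *\<^sub>R matpow (-X) j" for j
  have ma: "mexp X = suminf a" and mb: "mexp (-X) = suminf b"
    by (simp_all add: mexp_def a_def[abs_def] b_def[abs_def])
  have sa: "summable a" and sb: "summable b"
    using mexp_summable[of X] mexp_summable[of "-X"] by (simp_all add: a_def[abs_def] b_def[abs_def])
  have prod: "a i ** b j = ((1 / fact i) * (1 / fact j) * (-1) ^ j) *\<^sub>R matpow X (i + j)" for i j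
  proof -
    have "matpow (-X) j = (-1) ^ j *\<^sub>R matpow X j"
      using matpow_scale[of "-1" X j] by simp
    thus ?thesis
      by (simp add: a_def b_def matrix_scalar_ac scalar_matrix_assoc[symmetric] matpow_add mult.commute)
  qed
  show ?thesis
  proof (subst vec_eq_iff, intro allI, subst vec_eq_iff, intro allI)
    fix r l
    have S: "\<And>m. (\<lambda>k. \<Sum>i\<le>k. a i $ r $ m * b (k - i) $ m $ l) sums (mexp X $ r $ m * mexp (-X) $ m $ l)"
    proof -
      fix m
      have "(\<Sum>k. a k $ r $ m) = mexp X $ r $ m"
        using summable_mat_entry[OF sa, of r m] ma by (simp add: sums_iff)
      moreover have "(\<Sum>k. b k $ m $ l) = mexp (-X) $ m $ l"
        using summable_mat_entry[OF sb, of m l] mb by (simp add: sums_iff)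
      ultimately show "?thesis m"
        using Cauchy_product_sums[of "\<lambda>k. a k $ r $ m" "\<lambda>k. b k $ m $ l"]
          mexp_entry_abs_summable[of X r m] mexp_entry_abs_summable[of "-X" m l]
        by (simp add: a_def b_def)
    qed
    have S2: "(\<lambda>k. \<Sum>m\<in>UNIV. \<Sum>i\<le>k. a i $ r $ m * b (k - i) $ m $ l) sums ((mexp X ** mexp (-X)) $ r $ l)"
      using sums_sum[of UNIV, OF S] by (simp add: matrix_matrix_mult_def)
    have E: "(\<Sum>m\<in>UNIV. \<Sum>i\<le>k. a i $ r $ m * b (k - i) $ m $ l) = (if k = 0 then mat 1 $ r $ l else 0)" for k
    proof -
      have "(\<Sum>m\<in>UNIV. \<Sum>i\<le>k. a i $ r $ m * b (k - i) $ m $ l) = (\<Sum>i\<le>k. (a i ** b (k - i)) $ r $ l)"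
        by (subst sum.swap) (simp add: matrix_matrix_mult_def)
      also have "\<dots> = (\<Sum>i\<le>k. ((1 / fact i) * (1 / fact (k - i)) * (-1) ^ (k - i)) * matpow X k $ r $ l)"
        by (intro sum.cong refl) (simp add: prod)
      also have "\<dots> = (\<Sum>i\<le>k. (1 / fact i) * (1 / fact (k - i)) * (-1::real) ^ (k - i)) * matpow X k $ r $ l"
        by (simp add: sum_distrib_right)
      also have "\<dots> = (if k = 0 then mat 1 $ r $ l else 0)" by (simp only: binom_alt_sum) simp
      finally show ?thesis .
    qed
    have "(\<lambda>k. if k = 0 then mat 1 $ r $ l else 0) sums (mat 1 $ r $ l :: real)"
      using sums_single[of 0 "\<lambda>_. mat 1 $ r $ l :: real"] by simp
    with S2 show "(mexp X ** mexp (-X)) $ r $ l = mat 1 $ r $ l"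
      unfolding E by (simp add: sums_unique2)
  qed
qed




lemma nrm_sums_le:
  fixes N :: "real^'n \<Rightarrow> real"
  assumes N: "is_norm N" and f: "f sums s" and g: "g sums G" and le: "\<And>j. N (f j) \<le> g j"
  shows "N s \<le> G"
proof (rule LIMSEQ_le)
  show "(\<lambda>n. N (\<Sum>i<n. f i)) \<longlonglongrightarrow> N s" using nrm_tendsto[OF N] f by (simp add: sums_def)
  show "(\<lambda>n. \<Sum>i<n. g i) \<longlonglongrightarrow> G" using g by (simp add: sums_def)
  show "\<exists>M. \<forall>n\<ge>M. N (\<Sum>i<n. f i) \<le> (\<Sum>i<n. g i)"
    by (intro exI[of _ 0] allI impI order_trans[OF nrm_sum[OF N] sum_mono] le)
qed

lemma theta_sums: "(\<lambda>j. r ^ (j + k) / fact (j + k)) sums theta r k"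
proof -
  have "summable (\<lambda>j. r ^ (j + k) / fact (j + k))"
    by (subst summable_iff_shift) (rule exp_term_summable)
  thus ?thesis unfolding theta_def by (rule summable_sums)
qed
lemma theta_nonneg: "r \<ge> 0 \<Longrightarrow> theta r k \<ge> 0"
  by (rule sums_le[OF _ sums_zero theta_sums]) simp

lemma matpow_scaled_nrm:
  fixes A :: "real^'n^'n"
  assumes N: "is_norm N"
  shows "N ((1 / fact i) *\<^sub>R (matpow (s *\<^sub>R A) i *v y)) \<le> (\<bar>s\<bar> * op_norm N N A) ^ i / fact i * N y"
proof -
  have "matpow (s *\<^sub>R A) i *v y = s ^ i *\<^sub>R (matpow A i *v y)"
    by (simp add: matpow_scale scaleR_matrix_vector_assoc)
  hence "N ((1 / fact i) *\<^sub>R (matpow (s *\<^sub>R A) i *v y)) = (1 / fact i) * (\<bar>s\<bar> ^ i * N (matpow A i *v y))"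
    by (simp only: nrm_basic(5)[OF N] power_abs abs_divide abs_one abs_of_nonneg[OF fact_ge_zero])
  also have "\<dots> \<le> (1 / fact i) * (\<bar>s\<bar> ^ i * (op_norm N N A ^ i * N y))"
    by (intro mult_left_mono matpow_nrm[OF N]) auto
  finally show ?thesis by (simp add: power_mult_distrib)
qed

lemma tail_bound:
  fixes A :: "real^'n^'n"
  assumes N: "is_norm N" and t: "t \<ge> 0"
  shows "N ((mexp (t *\<^sub>R A) - Ltrunc A t k) *v y) \<le> theta (t * op_norm N N A) k * N y"
proof -
  define f where "f j = (1 / fact j) *\<^sub>R (matpow (t *\<^sub>R A) j *v y)" for j
  have fs: "f sums (mexp (t *\<^sub>R A) *v y)" unfolding f_def[abs_def] by (rule mexp_sums_vec)
  have L: "Ltrunc A t k *v y = (\<Sum>j<k. f j)"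
    unfolding Ltrunc_def f_def
    by (simp add: real_vector.linear_sum[OF bounded_linear.linear[OF mv_bl]] scaleR_matrix_vector_assoc)
  have sh: "(\<lambda>j. f (j + k)) sums ((mexp (t *\<^sub>R A) - Ltrunc A t k) *v y)"
    using fs sums_iff_shift'[of f k] by (simp add: L matrix_vector_mult_diff_rdistrib)
  show ?thesis
  proof (rule nrm_sums_le[OF N sh sums_mult2[OF theta_sums]])
    fix j
    show "N (f (j + k)) \<le> (t * op_norm N N A) ^ (j + k) / fact (j + k) * N y"
      using matpow_scaled_nrm[OF N, of "j + k" t A y] t by (simp add: f_def)
  qed
qed

lemma expinv_bound:
  fixes A :: "real^'n^'n"
  assumes N: "is_norm N" and t: "t \<ge> 0"
  shows "N (mexp (- (t *\<^sub>R A)) *v z) \<le> exp (t * op_norm N N A) * N z"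
proof -
  have e: "(\<lambda>n. (t * op_norm N N A) ^ n / fact n) sums exp (t * op_norm N N A)"
    using exp_converges[of "t * op_norm N N A"] by (simp add: divide_inverse mult.commute)
  have m: "- (t *\<^sub>R A) = (- t) *\<^sub>R A" by simp
  show ?thesis
  proof (rule nrm_sums_le[OF N mexp_sums_vec sums_mult2[OF e]])
    fix j
    show "N ((1 / fact j) *\<^sub>R (matpow (- (t *\<^sub>R A)) j *v z)) \<le> (t * op_norm N N A) ^ j / fact j * N z"
      using matpow_scaled_nrm[OF N, of j "-t" A z] t unfolding m by simp
  qed
qed




definition penrose :: "real^'p^'n \<Rightarrow> real^'n^'p \<Rightarrow> bool" where
  "penrose G X \<longleftrightarrow> G ** X ** G = G \<and> X ** G ** X = X
      \<and> transpose (G ** X) = G ** X \<and> transpose (X ** G) = X ** G"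

lemma penrose_unique:
  assumes X: "penrose G X" and Y: "penrose G Y"
  shows "X = Y"
proof -
  from X have x1: "G ** X ** G = G" and x2: "X ** G ** X = X"
    and x3: "transpose (G ** X) = G ** X" and x4: "transpose (X ** G) = X ** G"
    by (auto simp: penrose_def)
  from Y have y1: "G ** Y ** G = G" and y2: "Y ** G ** Y = Y"
    and y3: "transpose (G ** Y) = G ** Y" and y4: "transpose (Y ** G) = Y ** G"
    by (auto simp: penrose_def)
  have tG: "transpose G = transpose G ** transpose Y ** transpose G"
    using y1 by (metis matrix_transpose_mul matrix_mul_assoc)
  have tG2: "transpose G = transpose G ** transpose X ** transpose G"
    using x1 by (metis matrix_transpose_mul matrix_mul_assoc)
  have "X = X ** (G ** X)" using x2 by (simp add: matrix_mul_assoc)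
  also have "\<dots> = X ** (transpose X ** transpose G)" using x3 by (metis matrix_transpose_mul)
  also have "\<dots> = X ** transpose X ** (transpose G ** transpose Y ** transpose G)"
    using tG by (simp add: matrix_mul_assoc)
  also have "\<dots> = X ** transpose (G ** X) ** transpose (G ** Y)"
    by (simp add: matrix_transpose_mul matrix_mul_assoc)
  also have "\<dots> = X ** G ** X ** G ** Y" using x3 y3 by (simp add: matrix_mul_assoc)
  also have "\<dots> = X ** G ** Y" using x2 by simp
  finally have e1: "X = X ** G ** Y" .
  have "Y = (Y ** G) ** Y" using y2 by simp
  also have "\<dots> = transpose G ** transpose Y ** Y" using y4 by (metis matrix_transpose_mul)
  also have "\<dots> = (transpose G ** transpose X ** transpose G) ** transpose Y ** Y"
    using tG2 by simp
  also have "\<dots> = transpose (X ** G) ** transpose (Y ** G) ** Y"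
    by (simp add: matrix_transpose_mul matrix_mul_assoc)
  also have "\<dots> = X ** G ** Y ** G ** Y" using x4 y4 by (simp add: matrix_mul_assoc)
  also have "\<dots> = X ** G ** Y" by (metis y2 matrix_mul_assoc)
  finally show ?thesis using e1 by simp
qed

lemma mp_right_inverse:
  fixes G :: "real^'p^'n"
  assumes r: "rank G = CARD('n)"
  shows "G ** mp_inverse G = mat 1"
proof -
  have injT: "inj ((*v) (transpose G))"
    using r rank_transpose[of G] full_rank_injective[of "transpose G"] by simp
  define S where "S = G ** transpose G"
  have kerS: "S *v x = 0 \<Longrightarrow> x = 0" for x
  proof -
    assume "S *v x = 0"
    hence "x \<bullet> (G *v (transpose G *v x)) = 0" by (metis S_def matrix_vector_mul_assoc inner_zero_right)
    hence "(transpose G *v x) \<bullet> (transpose G *v x) = 0"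
      by (metis dot_lmul_matrix vector_transpose_matrix transpose_transpose)
    hence "transpose G *v x = transpose G *v 0" by simp
    thus "x = 0" using injT by (meson injD)
  qed
  have "inj ((*v) S)"
  proof (rule injI)
    fix x y assume "S *v x = S *v y"
    hence "S *v (x - y) = 0" by (simp add: matrix_vector_mult_diff_distrib)
    thus "x = y" using kerS[of "x - y"] by simp
  qed
  then obtain B where B: "B ** S = mat 1" using matrix_left_invertible_injective by blast
  hence SB: "S ** B = mat 1" using matrix_left_right_inverse by blast
  have St: "transpose S = S" by (simp add: S_def matrix_transpose_mul)
  have "transpose (B ** S) = mat 1" using B by (simp add: transpose_mat)
  hence SBt: "S ** transpose B = mat 1" by (simp add: matrix_transpose_mul St)
  have Bt: "transpose B = B"
  proof -
    have "transpose B = (B ** S) ** transpose B" using B by simp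
    also have "\<dots> = B ** (S ** transpose B)" by (simp add: matrix_mul_assoc)
    also have "\<dots> = B" using SBt by simp
    finally show ?thesis .
  qed
  define X0 where "X0 = transpose G ** B"
  have GX: "G ** X0 = mat 1" using SB by (simp add: X0_def S_def matrix_mul_assoc)
  have p: "penrose G X0" unfolding penrose_def
  proof (intro conjI)
    show "G ** X0 ** G = G" using GX by simp
    show "X0 ** G ** X0 = X0" by (simp add: matrix_mul_assoc[symmetric] GX)
    show "transpose (G ** X0) = G ** X0" using GX by (simp add: transpose_mat)
    show "transpose (X0 ** G) = X0 ** G"
      by (simp add: X0_def matrix_transpose_mul Bt matrix_mul_assoc)
  qed
  have "mp_inverse G = X0" unfolding mp_inverse_def
  proof (rule the_equality)
    show "G ** X0 ** G = G \<and> X0 ** G ** X0 = X0 \<and> transpose (G ** X0) = G ** X0 \<and> transpose (X0 ** G) = X0 ** G"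
      using p unfolding penrose_def .
    fix X assume "G ** X ** G = G \<and> X ** G ** X = X \<and> transpose (G ** X) = G ** X \<and> transpose (X ** G) = X ** G"
    hence "penrose G X" unfolding penrose_def .
    thus "X = X0" using penrose_unique[OF _ p] by blast
  qed
  thus ?thesis using GX by simp
qed



theorem corollary1:
  fixes Nn :: "real^'n \<Rightarrow> real" and Np :: "real^'p \<Rightarrow> real"
    and A :: "real^'n^'n" and c :: "real^'n" and G :: "real^'p^'n"
    and t :: real and k :: nat
  assumes "is_norm Nn" and "is_norm Np"
    and "t \<ge> 0"
    and "rank G = CARD('n)"
    and "deflation Nn Np A t c G k \<ge> 0"
  shows "(\<lambda>b. Ltrunc A t k *v (c + deflation Nn Np A t c G k *\<^sub>R (G *v b))) ` unit_ball Np
         \<subseteq> (\<lambda>x. mexp (t *\<^sub>R A) *v x) ` ((\<lambda>b. c + G *v b) ` unit_ball Np)"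
proof
  note Nn = assms(1) and Np = assms(2) and t = assms(3)
  define a where "a = op_norm Nn Nn A"
  define th where "th = theta (t * a) k"
  define X where "X = mp_inverse G"
  define oX where "oX = op_norm Nn Np X"
  define oG where "oG = op_norm Np Nn G"
  define q where "q = exp (t * a) * th * oX"
  define lam where "lam = deflation Nn Np A t c G k"
  have lam_eq: "lam = (1 - q * Nn c) / (1 + q * oG)"
    by (simp add: lam_def deflation_def Let_def q_def a_def th_def oX_def X_def oG_def)
  have lam0: "lam \<ge> 0" using assms(5) by (simp add: lam_def)
  have a0: "a \<ge> 0" unfolding a_def by (rule op_norm_bound(1)[OF Nn Nn])
  have th0: "th \<ge> 0" unfolding th_def using a0 t by (intro theta_nonneg) simp
  have oX0: "oX \<ge> 0" unfolding oX_def by (rule op_norm_bound(1)[OF Nn Np])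
  have oG0: "oG \<ge> 0" unfolding oG_def by (rule op_norm_bound(1)[OF Np Nn])
  have q0: "q \<ge> 0" unfolding q_def using th0 oX0 by simp
  have den: "1 + q * oG > 0" using q0 oG0 by (simp add: add_pos_nonneg)
  have lam_id: "lam * (1 + q * oG) = 1 - q * Nn c" using den by (simp add: lam_eq)
  define M where "M = mexp (t *\<^sub>R A)"
  define Mi where "Mi = mexp (- (t *\<^sub>R A))"
  define L where "L = Ltrunc A t k"
  have MMi: "M ** Mi = mat 1" unfolding M_def Mi_def by (rule mexp_inv)
  have GX: "G ** X = mat 1" unfolding X_def by (rule mp_right_inverse[OF assms(4)])
  fix v assume "v \<in> (\<lambda>b. Ltrunc A t k *v (c + deflation Nn Np A t c G k *\<^sub>R (G *v b))) ` unit_ball Np"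
  then obtain b where b: "Np b \<le> 1" and v: "v = L *v (c + lam *\<^sub>R (G *v b))"
    by (auto simp: unit_ball_def L_def lam_def)
  define y where "y = c + lam *\<^sub>R (G *v b)"
  define r where "r = (M - L) *v y"
  define w where "w = Mi *v r"
  define b' where "b' = lam *\<^sub>R b - X *v w"
  have r_le: "Nn r \<le> th * Nn y"
    unfolding r_def M_def L_def th_def a_def by (rule tail_bound[OF Nn t])
  have w_le: "Nn w \<le> exp (t * a) * Nn r"
    unfolding w_def Mi_def a_def by (rule expinv_bound[OF Nn t])
  have y_le: "Nn y \<le> Nn c + lam * oG"
  proof -
    have "Nn y \<le> Nn c + Nn (lam *\<^sub>R (G *v b))" unfolding y_def by (rule nrm_basic(3)[OF Nn])
    also have "Nn (lam *\<^sub>R (G *v b)) = lam * Nn (G *v b)" using lam0 by (simp add: nrm_basic(5)[OF Nn])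
    also have "lam * Nn (G *v b) \<le> lam * (oG * Np b)"
      unfolding oG_def by (intro mult_left_mono lam0 op_norm_bound(2)[OF Np Nn])
    also have "\<dots> \<le> lam * oG" using b lam0 oG0 by (intro mult_left_mono) (simp_all add: mult_left_le)
    finally show ?thesis by simp
  qed
  have Xw_le: "Np (X *v w) \<le> oX * Nn w" unfolding oX_def by (rule op_norm_bound(2)[OF Nn Np])
  have w_le2: "Nn w \<le> exp (t * a) * th * (Nn c + lam * oG)"
  proof -
    have "Nn w \<le> exp (t * a) * (th * Nn y)" using w_le r_le by (meson exp_ge_zero mult_left_mono order_trans)
    also have "\<dots> \<le> exp (t * a) * (th * (Nn c + lam * oG))"
      using y_le th0 by (intro mult_left_mono) auto
    finally show ?thesis by (simp add: mult.assoc)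
  qed
  have "Np b' \<le> Np (lam *\<^sub>R b) + Np (X *v w)"
    unfolding b'_def by (rule nrm_basic(8)[OF Np])
  also have "Np (lam *\<^sub>R b) \<le> lam" using lam0 b by (simp add: nrm_basic(5)[OF Np] mult_left_le)
  also have "Np (X *v w) \<le> oX * (exp (t * a) * th * (Nn c + lam * oG))"
    using Xw_le w_le2 oX0 by (meson mult_left_mono order_trans)
  also have "lam + oX * (exp (t * a) * th * (Nn c + lam * oG)) = lam * (1 + q * oG) + q * Nn c"
    by (simp add: q_def algebra_simps)
  also have "\<dots> = 1" using lam_id by simp
  finally have b'1: "b' \<in> unit_ball Np" by (simp add: unit_ball_def)
  have "c + G *v b' = y - w"
    by (simp add: b'_def y_def matrix_vector_mult_diff_distrib matrix_vector_mul_assoc GX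
        scaleR_matrix_vector_assoc matrix_scaleR_vector_ac)
  hence "M *v (c + G *v b') = M *v y - M *v (Mi *v r)"
    by (simp add: w_def matrix_vector_mult_diff_distrib)
  also have "\<dots> = L *v y"
    by (simp add: matrix_vector_mul_assoc MMi r_def matrix_vector_mult_diff_rdistrib)
  finally have "v = M *v (c + G *v b')" by (simp add: v y_def)
  thus "v \<in> (\<lambda>x. mexp (t *\<^sub>R A) *v x) ` ((\<lambda>b. c + G *v b) ` unit_ball Np)"
    using b'1 by (auto simp: M_def)
qed

end
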